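(* For every positive integer $m$ and every complex number $\alpha \neq 0$, $$\sum_{k=1}^m \left[ {m \atop k} \right] k^\alpha = \sum_{j=1}^m j!\, S(\alpha, j) \left[ {m+1 \atop j+1} \right].$$
   Context: For a complex number $\alpha \neq 0$ and a positive integer $k$, the Stirling function of the second kind is $$S(\alpha, k) = \frac{1}{k!} \sum_{j=1}^k (-1)^{k-j} \binom{k}{j} j^\alpha,$$ where for a positive integer $j$, $j^\alpha = e^{\alpha \ln j}$ with $\ln j$ the real logarithm. For nonnegative integers $n,k$, $\left[ {n \atop k} \right]$ denotes the unsigned Stirling number of the first kind, i.e. the number of permutations of an $n$-element set with exactly $k$ cycles; equivalently $x(x+1)\cdots(x+n-1) = \sum_{k=0}^n \left[ {n \atop k} \right] x^k$. *)

theory Defs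
  imports Complex_Main "HOL-Combinatorics.Stirling"
begin

text \<open>j^alpha = e^(alpha ln j) for a positive integer j, ln the real logarithm.\<close>
definition npow :: "nat \<Rightarrow> complex \<Rightarrow> complex" where
  "npow j \<alpha> = exp (\<alpha> * complex_of_real (ln (real j)))"

definition StirlingS :: "complex \<Rightarrow> nat \<Rightarrow> complex" where
  "StirlingS \<alpha> k = (1 / of_nat (fact k)) *
     (\<Sum>j=1..k. (-1) ^ (k - j) * of_nat (k choose j) * npow j \<alpha>)"

end

theory Submission
  imports Defs
begin

definition T :: "nat \<Rightarrow> nat \<Rightarrow> int" where
 "T n i = (\<Sum>j\<le>n. (-1)^(j+i) * int (j choose i) * int (stirling (Suc n) (Suc j)))"

lemma T_eq: "T n i = int (stirling n i)"
proof (induction n arbitrary: i)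
  case 0
  then show ?case by (cases i) (auto simp: T_def)
next
  case (Suc n)
  define s where "s j i = ((-1::int)^(j+i))" for j i
  have "T (Suc n) i = (\<Sum>j\<le>Suc n. s j i * int (j choose i) * (int (Suc n) * int (stirling (Suc n) (Suc j))))
      + (\<Sum>j\<le>Suc n. s j i * int (j choose i) * int (stirling (Suc n) j))"
    unfolding T_def s_def by (simp add: sum.distrib[symmetric] algebra_simps)
  also have "(\<Sum>j\<le>Suc n. s j i * int (j choose i) * (int (Suc n) * int (stirling (Suc n) (Suc j)))) = int (Suc n) * T n i"
    unfolding T_def s_def by (simp add: sum_distrib_left algebra_simps)
  also have "(\<Sum>j\<le>Suc n. s j i * int (j choose i) * int (stirling (Suc n) j))
       = (\<Sum>j\<le>n. s (Suc j) i * int (Suc j choose i) * int (stirling (Suc n) (Suc j)))"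
    by (subst sum.atMost_Suc_shift) simp
  finally have eq: "T (Suc n) i = int (Suc n) * T n i + (\<Sum>j\<le>n. s (Suc j) i * int (Suc j choose i) * int (stirling (Suc n) (Suc j)))" .
  show ?case
  proof (cases i)
    case 0
    have "(\<Sum>j\<le>n. s (Suc j) i * int (Suc j choose i) * int (stirling (Suc n) (Suc j))) = - T n i"
      unfolding T_def s_def using 0 by (simp add: sum_negf[symmetric])
    then show ?thesis using eq 0 Suc.IH by (cases n) auto
  next
    case (Suc i')
    have "(\<Sum>j\<le>n. s (Suc j) i * int (Suc j choose i) * int (stirling (Suc n) (Suc j))) = T n i' - T n i"
      unfolding T_def s_def using Suc by (simp add: sum_subtractf[symmetric] algebra_simps)
    then show ?thesis using eq Suc Suc.IH by (simp add: algebra_simps)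
  qed
qed

lemma inner:
  assumes "1 \<le> i" "i \<le> m"
  shows "(\<Sum>j=1..m. (-1::complex)^(j-i) * of_nat (j choose i) * of_nat (stirling (m+1) (j+1)))
        = of_nat (stirling m i)"
proof -
  have "(\<Sum>j=1..m. (-1::complex)^(j-i) * of_nat (j choose i) * of_nat (stirling (m+1) (j+1)))
     = (\<Sum>j\<le>m. (-1::complex)^(j+i) * of_nat (j choose i) * of_nat (stirling (Suc m) (Suc j)))"
  proof -
    have a: "{..m} = insert 0 {1..m}" by auto
    have "(\<Sum>j\<le>m. (-1::complex)^(j+i) * of_nat (j choose i) * of_nat (stirling (Suc m) (Suc j)))
       = (\<Sum>j=1..m. (-1::complex)^(j+i) * of_nat (j choose i) * of_nat (stirling (Suc m) (Suc j)))"
      unfolding a using assms by (subst sum.insert) auto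
    also have "\<dots> = (\<Sum>j=1..m. (-1::complex)^(j-i) * of_nat (j choose i) * of_nat (stirling (m+1) (j+1)))"
    proof (rule sum.cong[OF refl])
      fix j assume "j \<in> {1..m}"
      show "(-1::complex)^(j+i) * of_nat (j choose i) * of_nat (stirling (Suc m) (Suc j))
          = (-1::complex)^(j-i) * of_nat (j choose i) * of_nat (stirling (m+1) (j+1))"
      proof (cases "i \<le> j")
        case True
        then have "j + i = (j - i) + 2*i" by simp
        then have "(-1::complex)^(j+i) = (-1)^(j-i) * ((-1)^2)^i" by (simp only: power_add power_mult)
        then have "(-1::complex)^(j+i) = (-1)^(j-i)" by simp
        then show ?thesis by simp
      qed simp
    qed
    finally show ?thesis by simp
  qed
  also have "\<dots> = of_int (T m i)" unfolding T_def by simp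
  also have "\<dots> = of_nat (stirling m i)" by (simp add: T_eq)
  finally show ?thesis .
qed

theorem proposition3:
  fixes m :: nat and \<alpha> :: complex
  assumes "m \<ge> 1" and "\<alpha> \<noteq> 0"
  shows "(\<Sum>k=1..m. of_nat (stirling m k) * npow k \<alpha>)
       = (\<Sum>j=1..m. of_nat (fact j) * StirlingS \<alpha> j * of_nat (stirling (m + 1) (j + 1)))"
proof -
  have "(\<Sum>j=1..m. of_nat (fact j) * StirlingS \<alpha> j * of_nat (stirling (m + 1) (j + 1)))
     = (\<Sum>j=1..m. \<Sum>i=1..j. (-1)^(j-i) * of_nat (j choose i) * npow i \<alpha> * of_nat (stirling (m + 1) (j + 1)))"
    unfolding StirlingS_def by (simp add: sum_distrib_right)
  also have "\<dots> = (\<Sum>j=1..m. \<Sum>i=1..m. (-1)^(j-i) * of_nat (j choose i) * npow i \<alpha> * of_nat (stirling (m + 1) (j + 1)))"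
  proof (rule sum.cong[OF refl])
    fix j assume "j \<in> {1..m}"
    then show "(\<Sum>i=1..j. (-1)^(j-i) * of_nat (j choose i) * npow i \<alpha> * of_nat (stirling (m + 1) (j + 1)))
       = (\<Sum>i=1..m. (-1)^(j-i) * of_nat (j choose i) * npow i \<alpha> * of_nat (stirling (m + 1) (j + 1)))"
      by (intro sum.mono_neutral_left) auto
  qed
  also have "\<dots> = (\<Sum>i=1..m. npow i \<alpha> * (\<Sum>j=1..m. (-1::complex)^(j-i) * of_nat (j choose i) * of_nat (stirling (m+1) (j+1))))"
    by (subst sum.swap) (simp add: sum_distrib_left algebra_simps)
  also have "\<dots> = (\<Sum>i=1..m. npow i \<alpha> * of_nat (stirling m i))"
  proof (rule sum.cong[OF refl])
    fix i assume "i \<in> {1..m}"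
    then have "1 \<le> i" "i \<le> m" by auto
    from inner[OF this] show "npow i \<alpha> * (\<Sum>j=1..m. (-1::complex)^(j-i) * of_nat (j choose i) * of_nat (stirling (m+1) (j+1)))
       = npow i \<alpha> * of_nat (stirling m i)" by (rule arg_cong)
  qed
  finally show ?thesis by (simp add: mult.commute)
qed

end
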